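(* Let $p_k\ge0$ ($k\ge1$) with $\sum_k p_k=1$ and $Q_1=\sum_k kp_k<\infty$, let $Q(z)=\sum_k p_kz^k$, and for $q\in(0,1)$ define $\kappa(q)>0$ by $$-\log\kappa(q)=\int_0^{1-q}\Big(\frac{Q_1}{1-Q(z)}-\frac{1}{1-z}\Big)\,dz.$$ Then $\kappa$ is slowly varying at $0$: for every $\lambda>0$, $\kappa(\lambda q)/\kappa(q)\to1$ as $q\to0$. *)

theory Defs
  imports "HOL-Analysis.Analysis"
begin

text \<open>The offspring law is given by p :: nat => real, where only the values p k for k >= 1
  are used (the value p 0 is ignored).\<close>

definition genfun :: "(nat \<Rightarrow> real) \<Rightarrow> real \<Rightarrow> real" where
  "genfun p z = (\<Sum>k. p (Suc k) * z ^ Suc k)"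

definition mean1 :: "(nat \<Rightarrow> real) \<Rightarrow> real" where
  "mean1 p = (\<Sum>k. real (Suc k) * p (Suc k))"

definition kappa :: "(nat \<Rightarrow> real) \<Rightarrow> real \<Rightarrow> real" where
  "kappa p q = exp (- integral {0..1 - q}
      (\<lambda>z. mean1 p / (1 - genfun p z) - 1 / (1 - z)))"

end

theory Submission
  imports Defs
begin

theorem lemma3p8:
  fixes p :: "nat \<Rightarrow> real"
  assumes nonneg: "\<And>k. k \<ge> 1 \<Longrightarrow> p k \<ge> 0"
    and prob: "(\<lambda>k. p (Suc k)) sums 1"
    and mean_fin: "summable (\<lambda>k. real (Suc k) * p (Suc k))"
  shows "\<forall>c>0. ((\<lambda>q. kappa p (c * q) / kappa p q) \<longlongrightarrow> 1) (at_right 0)"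
proof -
  have pn: "\<And>k. p (Suc k) \<ge> 0" using nonneg by simp
  define t where "t = (\<lambda>k (z::real). p (Suc k) * (\<Sum>j<Suc k. z ^ j))"
  define g where "g = (\<lambda>z. \<Sum>k. t k z)"
  define m where "m = mean1 p"
  have sb: "0 \<le> (\<Sum>j<Suc k. z ^ j) \<and> (\<Sum>j<Suc k. z ^ j) \<le> real (Suc k)"
    if "z \<in> {0..1}" for z :: real and k
  proof
    show "0 \<le> (\<Sum>j<Suc k. z ^ j)" using that by (intro sum_nonneg) auto
    have "(\<Sum>j<Suc k. z ^ j) \<le> (\<Sum>j<Suc k. 1)"
      using that by (intro sum_mono) (auto intro: power_le_one)
    then show "(\<Sum>j<Suc k. z ^ j) \<le> real (Suc k)" by simp
  qed
  have tb: "norm (t k z) \<le> real (Suc k) * p (Suc k)" if "z \<in> {0..1}" for z k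
  proof -
    have "norm (t k z) = p (Suc k) * (\<Sum>j<Suc k. z ^ j)"
      using sb[OF that, of k] pn[of k] unfolding t_def by simp
    also have "\<dots> \<le> p (Suc k) * real (Suc k)"
      using sb[OF that, of k] pn[of k] by (intro mult_left_mono) auto
    finally show ?thesis by (simp add: mult.commute)
  qed
  have tsum: "summable (\<lambda>k. t k z)" if "z \<in> {0..1}" for z
    by (rule summable_comparison_test[OF _ mean_fin]) (use tb[OF that] in auto)
  have ucont: "uniform_limit {0..1} (\<lambda>n x. \<Sum>i<n. t i x) g sequentially"
    unfolding g_def by (rule Weierstrass_m_test[OF tb mean_fin])
  have gcont: "continuous_on {0..1} g"
    by (rule uniform_limit_theorem[OF _ ucont])
       (auto simp del: sum.lessThan_Suc simp: t_def intro!: continuous_intros always_eventually)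
  have g1: "g 1 = m"
    unfolding g_def m_def mean1_def t_def by (simp add: mult.commute)
  have gge: "g z \<ge> 1" if "z \<in> {0..1}" for z
  proof -
    have "1 = (\<Sum>k. p (Suc k))" using prob by (simp add: sums_iff)
    also have "\<dots> \<le> g z" unfolding g_def
    proof (rule suminf_le[OF _ _ tsum[OF that]])
      show "summable (\<lambda>k. p (Suc k))" using prob by (simp add: sums_iff)
      fix k
      have "1 \<le> (\<Sum>j<Suc k. z ^ j)"
      proof -
        have "(\<Sum>j<Suc k. z ^ j) = 1 + (\<Sum>j<k. z ^ Suc j)"
          by (simp only: sum.lessThan_Suc_shift power_0)
        moreover have "0 \<le> (\<Sum>j<k. z ^ Suc j)" using that by (intro sum_nonneg) auto
        ultimately show ?thesis by simp
      qed
      then show "p (Suc k) \<le> t k z" unfolding t_def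
        using pn[of k] mult_left_mono[of 1 _ "p (Suc k)"] by simp
    qed
    finally show ?thesis .
  qed
  have mpos: "m \<ge> 1" using gge[of 1] g1 by simp
  have gen: "1 - genfun p z = (1 - z) * g z" if "z \<in> {0..1}" for z
  proof -
    have s1: "(\<lambda>k. p (Suc k) * z ^ Suc k) sums genfun p z"
      unfolding genfun_def
    proof (rule summable_sums, rule summable_comparison_test[of _ "\<lambda>k. p (Suc k)"])
      show "summable (\<lambda>k. p (Suc k))" using prob by (simp add: sums_iff)
      show "\<exists>N. \<forall>n\<ge>N. norm (p (Suc n) * z ^ Suc n) \<le> p (Suc n)"
      proof (intro exI allI impI)
        fix n :: nat
        have "z ^ Suc n \<le> 1" using that by (intro power_le_one) auto
        then show "norm (p (Suc n) * z ^ Suc n) \<le> p (Suc n)"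
          using that pn[of n] by (simp add: abs_mult mult_left_le del: power_Suc)
      qed
    qed
    have s2: "(\<lambda>k. p (Suc k) - p (Suc k) * z ^ Suc k) sums (1 - genfun p z)"
      by (rule sums_diff[OF prob s1])
    have s3: "(\<lambda>k. (1 - z) * t k z) sums ((1 - z) * g z)"
      unfolding g_def by (rule sums_mult[OF summable_sums[OF tsum[OF that]]])
    have "(\<lambda>k. p (Suc k) - p (Suc k) * z ^ Suc k) = (\<lambda>k. (1 - z) * t k z)"
    proof
      fix k
      show "p (Suc k) - p (Suc k) * z ^ Suc k = (1 - z) * t k z"
      proof -
        have "p (Suc k) - p (Suc k) * z ^ Suc k = p (Suc k) * (1 - z ^ Suc k)"
          by (simp add: algebra_simps)
        also have "\<dots> = p (Suc k) * ((1 - z) * (\<Sum>j<Suc k. z ^ j))"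
          by (simp only: one_diff_power_eq)
        finally show ?thesis unfolding t_def by (simp only: ac_simps)
      qed
    qed
    with s2 s3 show ?thesis using sums_unique2 by metis
  qed
  define H where "H = (\<lambda>z. m / g z - 1)"
  define F where "F = (\<lambda>z. mean1 p / (1 - genfun p z) - 1 / (1 - z))"
  have FH: "F z = H z / (1 - z)" if "z \<in> {0..<1}" for z
  proof -
    have "g z \<ge> 1" using gge that by auto
    moreover have "1 - z > 0" using that by auto
    moreover have "1 - genfun p z = (1 - z) * g z" using gen[of z] that by auto
    ultimately have "F z = m / ((1 - z) * g z) - 1 / (1 - z)"
      unfolding F_def m_def by simp
    also have "\<dots> = (m / g z - 1) / (1 - z)"
      by (simp add: diff_divide_distrib divide_divide_eq_left mult.commute)
    finally show ?thesis unfolding H_def .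
  qed
  have Hcont: "continuous_on {0..1} H"
  proof -
    have "\<forall>x\<in>{0..1}. g x \<noteq> 0" using gge by (metis not_one_le_zero)
    then show ?thesis unfolding H_def by (intro continuous_intros gcont) auto
  qed
  have H1: "H 1 = 0" unfolding H_def g1 using mpos by simp
  have Fint: "F integrable_on {0..b}" if "b < 1" for b
  proof (rule integrable_continuous_interval)
    have "continuous_on {0..b} (\<lambda>z. H z / (1 - z))"
      using that by (auto intro!: continuous_intros continuous_on_subset[OF Hcont])
    then show "continuous_on {0..b} F"
      by (rule continuous_on_cong[THEN iffD1, rotated 2]) (use that FH in auto)
  qed
  define I where "I = (\<lambda>x. integral {0..x} F)"
  have kap: "kappa p q = exp (- I (1 - q))" for q
    unfolding kappa_def I_def F_def by simp
  have bound: "\<bar>I b - I a\<bar> \<le> e / s * (b - a)"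
    if "0 \<le> a" "a \<le> b" "b < 1" "0 < s" "s \<le> 1 - b" "0 \<le> e"
       "\<And>z. z \<in> {a..b} \<Longrightarrow> \<bar>H z\<bar> \<le> e" for a b s e
  proof -
    have "I b = I a + integral {a..b} F"
      unfolding I_def
      by (rule Henstock_Kurzweil_Integration.integral_combine[symmetric])
         (use that Fint in auto)
    moreover have "norm (integral {a..b} F) \<le> e / s * Henstock_Kurzweil_Integration.content {a..b}"
    proof (rule has_integral_bound_real[where S="{}"])
      show "0 \<le> e / s" using that by simp
      show "(F has_integral integral {a..b} F) {a..b}"
        by (rule integrable_integral, rule integrable_subinterval_real[OF Fint[OF \<open>b<1\<close>]])
           (use that in auto)
      fix z assume z: "z \<in> {a..b} - {}"
      then have "F z = H z / (1 - z)" using FH that by auto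
      moreover have "\<bar>H z\<bar> / (1 - z) \<le> e / s"
        using z that(7)[of z] that by (intro frac_le) auto
      ultimately show "norm (F z) \<le> e / s" using z that by (simp add: abs_div)
    qed auto
    ultimately show ?thesis using that by simp
  qed
  show ?thesis
  proof (intro allI impI)
    fix c :: real assume c: "c > 0"
    define cm where "cm = min c 1"
    define cM where "cM = max c 1"
    define K where "K = \<bar>c - 1\<bar> / cm"
    have cm: "cm > 0" "cm \<le> 1" "cM \<ge> 1" unfolding cm_def cM_def using c by auto
    have K0: "K \<ge> 0" unfolding K_def using cm by simp
    have lim: "((\<lambda>q. I (1 - q) - I (1 - c * q)) \<longlongrightarrow> 0) (at_right 0)"
    proof (rule tendstoI)
      fix \<epsilon> :: real assume \<epsilon>: "\<epsilon> > 0"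
      define e where "e = \<epsilon> / (K + 1)"
      have e0: "e > 0" unfolding e_def using \<epsilon> K0 by simp
      have eK: "e * K < \<epsilon>" unfolding e_def using \<epsilon> K0
        by (simp add: field_simps)
      obtain d where d: "d > 0" "\<And>z. z \<in> {0..1} \<Longrightarrow> dist z 1 < d \<Longrightarrow> dist (H z) (H 1) < e"
        using Hcont e0 unfolding continuous_on_iff by (meson atLeastAtMost_iff order_refl zero_le_one)
      have "\<forall>\<^sub>F q in at_right 0. q \<in> {0<..<min d 1 / cM}"
        by (rule eventually_at_right_real) (use d cm in auto)
      then show "\<forall>\<^sub>F q in at_right 0. dist (I (1 - q) - I (1 - c * q)) 0 < \<epsilon>"
      proof (rule eventually_mono)
        fix q assume q: "q \<in> {0<..<min d 1 / cM}"
        have qM: "cM * q < min d 1" using q cm by (simp add: field_simps)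
        have qm: "cm * q \<le> cM * q" using q cm unfolding cm_def cM_def by auto
        define a where "a = 1 - cM * q"
        define b where "b = 1 - cm * q"
        have B: "\<bar>I b - I a\<bar> \<le> e / (cm * q) * (b - a)"
        proof (rule bound)
          show "0 \<le> a" "a \<le> b" "b < 1" "0 < cm * q" "cm * q \<le> 1 - b" "0 \<le> e"
            unfolding a_def b_def using qM qm q cm e0 by auto
          fix z assume z: "z \<in> {a..b}"
          then have "z \<in> {0..1}" "dist z 1 < d"
          proof -
            have "cm * q > 0" using q cm by simp
            then show "z \<in> {0..1}" "dist z 1 < d"
              using z qM unfolding a_def b_def by (auto simp: dist_real_def)
          qed
          then show "\<bar>H z\<bar> \<le> e" using d(2)[of z] H1 by (simp add: dist_real_def)
        qed
        have "e / (cm * q) * (b - a) = e * K"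
          unfolding a_def b_def K_def cm_def cM_def using q c
          by (auto simp: field_simps min_def max_def abs_if)
        moreover have "\<bar>I (1 - q) - I (1 - c * q)\<bar> = \<bar>I b - I a\<bar>"
          unfolding a_def b_def cm_def cM_def using c
          by (cases "c \<le> 1") (auto simp: min_def max_def)
        ultimately show "dist (I (1 - q) - I (1 - c * q)) 0 < \<epsilon>"
          using B eK by (simp add: dist_real_def)
      qed
    qed
    have "((\<lambda>q. exp (I (1 - q) - I (1 - c * q))) \<longlongrightarrow> exp 0) (at_right 0)"
      by (rule tendsto_exp[OF lim])
    moreover have "(\<lambda>q. kappa p (c * q) / kappa p q) = (\<lambda>q. exp (I (1 - q) - I (1 - c * q)))"
      by (auto simp: kap exp_diff[symmetric])
    ultimately show "((\<lambda>q. kappa p (c * q) / kappa p q) \<longlongrightarrow> 1) (at_right 0)" by simp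
  qed
qed

end
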